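(* Let $D=2$, $C/2<K<C$, $U=rC$ and $\bar a=rK$ for some positive integer $r$, and let all user and creator types be drawn i.i.d. from the uniform distribution on $\{x\in\mathbb R^2_{\ge0}:\|x\|_2=1\}$, with creators indexed $1,\dots,C$ in increasing order of the angle of their type. Then the set of creators that stay after $t=0$ under the user-centric recommendation $UC_0$ (i.e. $\mathcal C_1$) is of the form $\{i,i+1,\dots,j\}$ for some $i,j\in[1,C]$, and $j-i+1\le K$; that is, at most $K$ creators stay.
   Context: Users $\mathcal U_0=\{1,\dots,U\}$, creators $\mathcal C_0=\{1,\dots,C\}$. At $t=0$ the user-centric recommendation assigns each user $i$ the set $UC_0(i)\in\arg\max_{S\subseteq\mathcal C_0,|S|\le K}\sum_{j\in S}u_i^Tc_j$. Creator $j$ stays after $t=0$ if $|\{i\in\mathcal U_0:j\in UC_0(i)\}|\ge\bar a$. *)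

theory Defs
  imports "HOL-Probability.Probability"
begin

text \<open>The uniform (arc-length) distribution on the quarter circle
  {x \<in> R^2_{\<ge>0}. norm x = 1} is the image of the uniform distribution of the
  angle on [0, pi/2] under t \<mapsto> (cos t, sin t).\<close>

definition arc_unif :: "(real \<times> real) measure" where
  "arc_unif = distr (uniform_measure lborel {0..pi/2}) borel (\<lambda>t. (cos t, sin t))"

definition type_angle :: "real \<times> real \<Rightarrow> real" where
  "type_angle x = arccos (fst x)"

definition is_UC0 ::
  "nat \<Rightarrow> nat \<Rightarrow> nat \<Rightarrow> (nat \<Rightarrow> real \<times> real) \<Rightarrow> (nat \<Rightarrow> real \<times> real) \<Rightarrow> (nat \<Rightarrow> nat set) \<Rightarrow> bool"
where
  "is_UC0 U C K u c UC \<longleftrightarrow>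
     (\<forall>i\<in>{1..U}. UC i \<subseteq> {1..C} \<and> card (UC i) \<le> K \<and>
        (\<forall>S. S \<subseteq> {1..C} \<and> card S \<le> K \<longrightarrow>
           (\<Sum>j\<in>S. inner (u i) (c j)) \<le> (\<Sum>j\<in>UC i. inner (u i) (c j))))"

definition stay_set :: "nat \<Rightarrow> nat \<Rightarrow> nat \<Rightarrow> (nat \<Rightarrow> nat set) \<Rightarrow> nat set" where
  "stay_set U C abar UC = {j \<in> {1..C}. abar \<le> card {i \<in> {1..U}. j \<in> UC i}}"

end

theory Submission imports Defs begin

definition goodu :: "real \<times> real \<Rightarrow> bool" where
  "goodu x \<longleftrightarrow> 0 < fst x \<and> 0 < snd x \<and> (fst x)^2 + (snd x)^2 = 1"

lemma prob_arc: "prob_space arc_unif"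
  unfolding arc_unif_def
  by (intro prob_space.prob_space_distr prob_space_uniform_measure) (auto simp: pi_gt_zero)

lemma AE_arc: "AE x in arc_unif. goodu x"
proof -
  have "AE t in uniform_measure lborel {0..pi/2}. goodu (cos t, sin t)"
  proof (rule AE_uniform_measureI)
    show "{0..pi/2} \<in> sets lborel" by simp
    show "AE x in lborel. x \<in> {0..pi/2} \<longrightarrow> goodu (cos x, sin x)"
      using AE_lborel_singleton[of "0::real"] AE_lborel_singleton[of "pi/2::real"]
    proof eventually_elim
      case (elim t)
      show ?case
      proof
        assume "t \<in> {0..pi/2}"
        then have "0 < t" "t < pi/2" using elim by auto
        then show "goodu (cos t, sin t)"
          by (auto simp: goodu_def intro!: cos_gt_zero sin_gt_zero)
      qed
    qed
  qed
  moreover have "{x\<in>space borel. goodu x} \<in> sets (borel :: (real \<times> real) measure)"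
  proof -
    have [measurable]: "fst \<in> borel_measurable (borel :: (real \<times> real) measure)"
         "snd \<in> borel_measurable (borel :: (real \<times> real) measure)"
      by (auto intro!: borel_measurable_continuous_onI continuous_intros)
    show ?thesis unfolding goodu_def by measurable
  qed
  ultimately show ?thesis unfolding arc_unif_def
    by (subst AE_distr_iff) auto
qed

lemma sets_arc[measurable_cong]: "sets arc_unif = sets borel"
  unfolding arc_unif_def by simp

lemma goodu_meas[measurable]: "Measurable.pred borel goodu"
proof -
    have [measurable]: "fst \<in> borel_measurable (borel :: (real \<times> real) measure)"
         "snd \<in> borel_measurable (borel :: (real \<times> real) measure)"
      by (auto intro!: borel_measurable_continuous_onI continuous_intros)
    show ?thesis unfolding goodu_def by measurable
qed

lemma AE_Pi_arc: "finite I \<Longrightarrow> AE x in PiM I (\<lambda>_. arc_unif). \<forall>i\<in>I. goodu (x i)"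
  by (intro AE_finite_allI AE_PiM_component prob_arc AE_arc) auto

lemma AE_all:
  "AE \<omega> in (PiM {1..U::nat} (\<lambda>_. arc_unif)) \<Otimes>\<^sub>M (PiM {1..C::nat} (\<lambda>_. arc_unif)).
     (\<forall>i\<in>{1..U}. goodu (fst \<omega> i)) \<and> (\<forall>j\<in>{1..C}. goodu (snd \<omega> j))"
proof -
  interpret M1: prob_space "PiM {1..U::nat} (\<lambda>_. arc_unif)"
    by (intro prob_space_PiM prob_arc)
  interpret M2: prob_space "PiM {1..C::nat} (\<lambda>_. arc_unif)"
    by (intro prob_space_PiM prob_arc)
  interpret P: pair_sigma_finite "PiM {1..U::nat} (\<lambda>_. arc_unif)" "PiM {1..C::nat} (\<lambda>_. arc_unif)"
    by unfold_locales
  show ?thesis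
  proof (rule P.AE_pair_measure)
    show "{x \<in> space (PiM {1..U::nat} (\<lambda>_. arc_unif) \<Otimes>\<^sub>M PiM {1..C::nat} (\<lambda>_. arc_unif)).
     (\<forall>i\<in>{1..U}. goodu (fst x i)) \<and> (\<forall>j\<in>{1..C}. goodu (snd x j))} \<in> sets (PiM {1..U::nat} (\<lambda>_. arc_unif) \<Otimes>\<^sub>M PiM {1..C::nat} (\<lambda>_. arc_unif))"
      by measurable
    show "AE x in PiM {1..U::nat} (\<lambda>_. arc_unif). AE y in PiM {1..C::nat} (\<lambda>_. arc_unif).
      (\<forall>i\<in>{1..U}. goodu (fst (x,y) i)) \<and> (\<forall>j\<in>{1..C}. goodu (snd (x,y) j))"
      using AE_Pi_arc[of "{1..U}"] AE_Pi_arc[of "{1..C}"] by (auto elim!: eventually_mono)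
  qed
qed

lemma goodu_angle:
  assumes "goodu x"
  shows "0 < type_angle x \<and> type_angle x < pi/2 \<and> x = (cos (type_angle x), sin (type_angle x))"
proof -
  obtain a b where x: "x = (a,b)" by (cases x)
  have a: "0 < a" "0 < b" "a^2 + b^2 = 1" using assms x by (auto simp: goodu_def)
  have "b^2 > 0" using a by simp
  then have "a^2 < 1" using a by linarith
  then have a1: "a < 1" using a abs_square_less_1[of a] by simp
  have ta: "type_angle x = arccos a" using x by (simp add: type_angle_def)
  have c: "cos (arccos a) = a" using a a1 by (intro cos_arccos) auto
  have s: "sin (arccos a) = b"
  proof -
    have "sin (arccos a) = sqrt (1 - a^2)" using a a1 by (intro sin_arccos) auto
    also have "1 - a^2 = b^2" using a by simp
    finally show ?thesis using a by simp
  qed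
  have b0: "0 < arccos a" "arccos a < pi" using arccos_lt_bounded[of a] a a1 by auto
  have "arccos a < pi/2"
    using arccos_less_arccos[of 0 a] a a1 by simp
  then show ?thesis using b0 c s ta x by auto
qed

lemma inner_cos:
  assumes "goodu x" "goodu y"
  shows "inner x y = cos (type_angle x - type_angle y)"
proof -
  have "x = (cos (type_angle x), sin (type_angle x))" "y = (cos (type_angle y), sin (type_angle y))"
    using goodu_angle assms by blast+
  then show ?thesis by (metis cos_diff fst_conv inner_Pair inner_real_def snd_conv)
qed

lemma cos_pos_diff: "0 < t \<Longrightarrow> t < pi/2 \<Longrightarrow> 0 < s \<Longrightarrow> s < pi/2 \<Longrightarrow> 0 < cos (t - s)"
  by (intro cos_gt_zero_pi) auto

lemma cos_unimodal:
  assumes "0 < t" "t < pi/2" "0 < s1" "s3 < pi/2" "s1 < s2" "s2 < s3"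
  shows "cos (t - s2) > min (cos (t - s1)) (cos (t - s3))"
proof (cases "t \<le> s2")
  case True
  have "cos (s3 - t) < cos (s2 - t)"
    using assms True by (intro cos_monotone_0_pi) auto
  moreover have "cos (s3 - t) = cos (t - s3)" "cos (s2 - t) = cos (t - s2)"
    by (metis cos_minus minus_diff_eq)+
  ultimately show ?thesis by (simp add: min_def)
next
  case False
  have "cos (t - s1) < cos (t - s2)"
    using assms False by (intro cos_monotone_0_pi) auto
  then show ?thesis by (simp add: min_def)
qed

definition convex_nat :: "nat set \<Rightarrow> bool" where
  "convex_nat W \<longleftrightarrow> (\<forall>a b c. a \<in> W \<and> c \<in> W \<and> a < b \<and> b < c \<longrightarrow> b \<in> W)"

lemma opt_window:
  fixes g :: "nat \<Rightarrow> real"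
  assumes pos: "\<And>k. k \<in> {1..C} \<Longrightarrow> 0 < g k"
    and uni: "\<And>a b c. a \<in> {1..C} \<Longrightarrow> c \<in> {1..C} \<Longrightarrow> a < b \<Longrightarrow> b < c \<Longrightarrow> g b > min (g a) (g c)"
    and W: "W \<subseteq> {1..C}" "card W \<le> K"
    and opt: "\<And>T. T \<subseteq> {1..C} \<Longrightarrow> card T \<le> K \<Longrightarrow> sum g T \<le> sum g W"
    and KC: "K < C"
  shows "card W = K \<and> convex_nat W"
proof
  have fW: "finite W" using W finite_subset by blast
  show "card W = K"
  proof (rule ccontr)
    assume "card W \<noteq> K"
    then have lt: "card W < K" using W by simp
    then have "W \<noteq> {1..C}" using KC by auto
    then obtain k where k: "k \<in> {1..C}" "k \<notin> W" using W by blast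
    have "sum g (insert k W) \<le> sum g W"
      using opt[of "insert k W"] k W lt fW by (simp add: card_insert_if)
    moreover have "sum g (insert k W) = g k + sum g W" using fW k by simp
    ultimately show False using pos[OF k(1)] by simp
  qed
  show "convex_nat W"
    unfolding convex_nat_def
  proof (intro allI impI, rule ccontr)
    fix a b c assume h: "a \<in> W \<and> c \<in> W \<and> a < b \<and> b < c" and nb: "b \<notin> W"
    have ac: "a \<in> {1..C}" "c \<in> {1..C}" using h W by auto
    then have bC: "b \<in> {1..C}" using h by auto
    have gb: "g b > min (g a) (g c)" using uni[OF ac] h by auto
    obtain x where x: "x \<in> W" "g x < g b" using gb h by (cases "g a \<le> g c") (auto simp: min_def)
    define T where "T = insert b (W - {x})"
    have cT: "card T = card W" unfolding T_def using fW x nb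
      by (simp add: card_insert_if card_Diff_singleton)
         (metis card_0_eq Suc_pred card_gt_0_iff empty_iff)
    have "sum g T \<le> sum g W" using opt[of T] cT W bC \<open>card W = K\<close> unfolding T_def by auto
    moreover have "sum g T = g b + (sum g W - g x)" unfolding T_def using fW x nb
      by (simp add: sum_diff1)
    ultimately show False using x by simp
  qed
qed

lemma comb:
  fixes W :: "nat \<Rightarrow> nat set" and C K r U abar :: nat
  assumes Wsub: "\<And>i. i \<in> {1..U} \<Longrightarrow> W i \<subseteq> {1..C}"
    and Wcard: "\<And>i. i \<in> {1..U} \<Longrightarrow> card (W i) = K"
    and Wconv: "\<And>i. i \<in> {1..U} \<Longrightarrow> convex_nat (W i)"
    and CK: "C < 2 * K" "K < C" and r: "0 < r" and U: "U = r * C" and ab: "abar = r * K"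
  shows "\<exists>i\<in>{1..C}. \<exists>j\<in>{1..C}. {k \<in> {1..C}. abar \<le> card {i \<in> {1..U}. k \<in> W i}} = {i..j} \<and> j + 1 - i \<le> K"
proof -
  define cnt where "cnt k = card {i \<in> {1..U}. k \<in> W i}" for k
  define T where "T = {k \<in> {1..C}. abar \<le> cnt k}"
  have below: "W a \<subseteq> {1..<k2}" if a: "a \<in> {1..U}" "k1 \<in> W a" "k2 \<notin> W a" "k1 < k2" for a k1 k2
  proof
    fix x assume x: "x \<in> W a"
    have "\<not> k2 \<le> x"
    proof
      assume "k2 \<le> x"
      then have "k2 < x" using x a by (cases "k2 = x") auto
      then show False using Wconv[OF a(1)] a x unfolding convex_nat_def by blast
    qed
    then show "x \<in> {1..<k2}" using Wsub[OF a(1)] x by auto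
  qed
  have above: "W a \<subseteq> {k2<..C}" if a: "a \<in> {1..U}" "k3 \<in> W a" "k2 \<notin> W a" "k2 < k3" for a k2 k3
  proof
    fix x assume x: "x \<in> W a"
    have "\<not> x \<le> k2"
    proof
      assume "x \<le> k2"
      then have "x < k2" using x a by (cases "k2 = x") auto
      then show False using Wconv[OF a(1)] a x unfolding convex_nat_def by blast
    qed
    then show "x \<in> {k2<..C}" using Wsub[OF a(1)] x by auto
  qed
  have Tconv: "k2 \<in> T" if h: "k1 \<in> T" "k3 \<in> T" "k1 < k2" "k2 < k3" for k1 k2 k3
  proof -
    have k2C: "k2 \<in> {1..C}" using h unfolding T_def by auto
    have "(\<forall>a\<in>{1..U}. k1 \<in> W a \<longrightarrow> k2 \<in> W a) \<or> (\<forall>b\<in>{1..U}. k3 \<in> W b \<longrightarrow> k2 \<in> W b)"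
    proof (rule ccontr)
      assume "\<not> ?thesis"
      then obtain a b where ab: "a \<in> {1..U}" "k1 \<in> W a" "k2 \<notin> W a" "b \<in> {1..U}" "k3 \<in> W b" "k2 \<notin> W b"
        by blast
      have "W a \<union> W b \<subseteq> {1..C}" using Wsub ab by blast
      then have "card (W a \<union> W b) \<le> C" using card_mono[of "{1..C}"] by fastforce
      moreover have "W a \<inter> W b = {}" using below[OF ab(1-3) h(3)] above[OF ab(4-6) h(4)] by fastforce
      moreover have "finite (W a)" "finite (W b)" using Wsub ab finite_subset by blast+
      ultimately have "card (W a) + card (W b) \<le> C" by (simp add: card_Un_disjoint)
      then show False using Wcard ab CK by simp
    qed
    then show ?thesis
    proof
      assume "\<forall>a\<in>{1..U}. k1 \<in> W a \<longrightarrow> k2 \<in> W a"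
      then have "cnt k1 \<le> cnt k2" unfolding cnt_def by (intro card_mono) auto
      then show ?thesis using h k2C unfolding T_def by auto
    next
      assume "\<forall>a\<in>{1..U}. k3 \<in> W a \<longrightarrow> k2 \<in> W a"
      then have "cnt k3 \<le> cnt k2" unfolding cnt_def by (intro card_mono) auto
      then show ?thesis using h k2C unfolding T_def by auto
    qed
  qed
  have noK: "\<not> (k \<in> T \<and> k + K \<in> T)" for k
  proof
    assume h: "k \<in> T \<and> k + K \<in> T"
    have disj: "{i \<in> {1..U}. k \<in> W i} \<inter> {i \<in> {1..U}. k + K \<in> W i} = {}"
    proof (rule ccontr)
      assume "\<not> ?thesis"
      then obtain i where i: "i \<in> {1..U}" "k \<in> W i" "k + K \<in> W i" by blast
      have "{k..k+K} \<subseteq> W i"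
      proof
        fix x assume x: "x \<in> {k..k+K}"
        show "x \<in> W i"
        proof (cases "x = k \<or> x = k + K")
          case True then show ?thesis using i by auto
        next
          case False then show ?thesis using Wconv[OF i(1)] i x unfolding convex_nat_def
            by (metis atLeastAtMost_iff le_neq_implies_less)
        qed
      qed
      then have "card {k..k+K} \<le> card (W i)" using Wsub[OF i(1)] finite_subset
        by (metis card_mono finite_atLeastAtMost)
      then show False using Wcard[OF i(1)] by simp
    qed
    have "cnt k + cnt (k + K) = card ({i \<in> {1..U}. k \<in> W i} \<union> {i \<in> {1..U}. k + K \<in> W i})"
      unfolding cnt_def using disj by (simp add: card_Un_disjoint)
    also have "\<dots> \<le> U" by (rule order_trans[OF card_mono[of "{1..U}"]]) auto
    finally have "cnt k + cnt (k + K) \<le> r * C" using U by simp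
    moreover have "cnt k + cnt (k+K) \<ge> 2 * (r * K)" using h ab unfolding T_def by auto
    moreover have "r * C < r * (2 * K)" using r CK by simp
    ultimately show False by simp
  qed
  have TC: "T \<subseteq> {1..C}" unfolding T_def by auto
  have "\<exists>i\<in>{1..C}. \<exists>j\<in>{1..C}. T = {i..j} \<and> j + 1 - i \<le> K"
  proof (cases "T = {}")
    case True
    then show ?thesis using CK by (intro bexI[of _ C] bexI[of _ 1]) auto
  next
    case False
    have fT: "finite T" using TC finite_subset by blast
    define i where "i = Min T"
    define j where "j = Max T"
    have ij: "i \<in> T" "j \<in> T" using False fT unfolding i_def j_def by auto
    have "T = {i..j}"
    proof
      show "T \<subseteq> {i..j}" using fT unfolding i_def j_def by auto
      show "{i..j} \<subseteq> T"
      proof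
        fix x assume x: "x \<in> {i..j}"
        show "x \<in> T"
        proof (cases "x = i \<or> x = j")
          case True then show ?thesis using ij by auto
        next
          case False then show ?thesis using Tconv[OF ij] x by auto
        qed
      qed
    qed
    moreover have "j + 1 - i \<le> K"
    proof (rule ccontr)
      assume "\<not> ?thesis"
      then have "i + K \<in> {i..j}" by auto
      then have "i + K \<in> T" using \<open>T = {i..j}\<close> by simp
      then show False using noK[of i] ij by simp
    qed
    ultimately show ?thesis using ij TC by blast
  qed
  then show ?thesis unfolding T_def cnt_def .
qed

theorem lemma12:
  fixes C K r U abar :: nat
  assumes "C < 2 * K" and "K < C" and "0 < r"
    and "U = r * C" and "abar = r * K"
  shows "AE \<omega> in (PiM {1..U} (\<lambda>_. arc_unif)) \<Otimes>\<^sub>M (PiM {1..C} (\<lambda>_. arc_unif)).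
    \<forall>UC \<sigma>. is_UC0 U C K (fst \<omega>) (snd \<omega>) UC \<and> bij_betw \<sigma> {1..C} {1..C} \<and>
           strict_mono_on {1..C} (\<lambda>k. type_angle (snd \<omega> (\<sigma> k))) \<longrightarrow>
      (\<exists>i\<in>{1..C}. \<exists>j\<in>{1..C}.
         {k \<in> {1..C}. \<sigma> k \<in> stay_set U C abar UC} = {i..j} \<and> j + 1 - i \<le> K)"
  using AE_all[of U C]
proof eventually_elim
  case (elim \<omega>)
  show ?case
  proof (intro allI impI)
    fix UC \<sigma>
    assume h: "is_UC0 U C K (fst \<omega>) (snd \<omega>) UC \<and> bij_betw \<sigma> {1..C} {1..C} \<and>
           strict_mono_on {1..C} (\<lambda>k. type_angle (snd \<omega> (\<sigma> k)))"
    define u where "u = fst \<omega>"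
    define c where "c = snd \<omega>"
    have gu: "\<And>i. i \<in> {1..U} \<Longrightarrow> goodu (u i)" and gc: "\<And>j. j \<in> {1..C} \<Longrightarrow> goodu (c j)"
      using elim unfolding u_def c_def by auto
    have UC: "is_UC0 U C K u c UC" and bij: "bij_betw \<sigma> {1..C} {1..C}"
      and sm: "strict_mono_on {1..C} (\<lambda>k. type_angle (c (\<sigma> k)))"
      using h unfolding u_def c_def by auto
    have sC: "\<And>k. k \<in> {1..C} \<Longrightarrow> \<sigma> k \<in> {1..C}" using bij bij_betwE by blast
    have inj: "inj_on \<sigma> {1..C}" using bij bij_betw_def by blast
    define W where "W i = {k \<in> {1..C}. \<sigma> k \<in> UC i}" for i
    have Wprops: "W i \<subseteq> {1..C} \<and> card (W i) = K \<and> convex_nat (W i)" if i: "i \<in> {1..U}" for i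
    proof -
      define g where "g k = inner (u i) (c (\<sigma> k))" for k
      have UCi: "UC i \<subseteq> {1..C}" "card (UC i) \<le> K"
        and opt0: "\<And>S. S \<subseteq> {1..C} \<Longrightarrow> card S \<le> K \<Longrightarrow>
           (\<Sum>j\<in>S. inner (u i) (c j)) \<le> (\<Sum>j\<in>UC i. inner (u i) (c j))"
        using UC i unfolding is_UC0_def by auto
      have imW: "\<sigma> ` W i = UC i"
      proof
        show "\<sigma> ` W i \<subseteq> UC i" unfolding W_def by auto
        show "UC i \<subseteq> \<sigma> ` W i"
        proof
          fix y assume y: "y \<in> UC i"
          then have "y \<in> \<sigma> ` {1..C}" using UCi bij bij_betw_imp_surj_on by blast
          then obtain k where "k \<in> {1..C}" "y = \<sigma> k" by blast
          then show "y \<in> \<sigma> ` W i" using y unfolding W_def by blast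
        qed
      qed
      have Wsub: "W i \<subseteq> {1..C}" unfolding W_def by auto
      have injW: "inj_on \<sigma> (W i)" using inj Wsub inj_on_subset by blast
      have cardW: "card (W i) = card (UC i)" using imW injW card_image by fastforce
      have sumW: "sum g (W i) = (\<Sum>j\<in>UC i. inner (u i) (c j))"
        unfolding g_def imW[symmetric] using injW by (simp add: sum.reindex)
      have "card (W i) = K \<and> convex_nat (W i)"
      proof (rule opt_window[where C=C and g=g])
        show "\<And>k. k \<in> {1..C} \<Longrightarrow> 0 < g k"
        proof -
          fix k assume k: "k \<in> {1..C}"
          have a1: "goodu (u i)" "goodu (c (\<sigma> k))" using gu[OF i] gc[OF sC[OF k]] by auto
          show "0 < g k" unfolding g_def inner_cos[OF a1]
            using goodu_angle[OF a1(1)] goodu_angle[OF a1(2)] by (intro cos_pos_diff) auto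
        qed
        show "\<And>a b d. a \<in> {1..C} \<Longrightarrow> d \<in> {1..C} \<Longrightarrow> a < b \<Longrightarrow> b < d \<Longrightarrow> g b > min (g a) (g d)"
        proof -
          fix a b d assume a: "a \<in> {1..C}" "d \<in> {1..C}" "a < b" "b < d"
          then have b: "b \<in> {1..C}" by auto
          have lt: "type_angle (c (\<sigma> a)) < type_angle (c (\<sigma> b))" "type_angle (c (\<sigma> b)) < type_angle (c (\<sigma> d))"
            using sm a b unfolding strict_mono_on_def by auto
          have "cos (type_angle (u i) - type_angle (c (\<sigma> b))) > min (cos (type_angle (u i) - type_angle (c (\<sigma> a)))) (cos (type_angle (u i) - type_angle (c (\<sigma> d))))"
            apply (rule cos_unimodal[OF _ _ _ _ lt])
            using goodu_angle[OF gu[OF i]] goodu_angle[OF gc[OF sC[OF a(1)]]] goodu_angle[OF gc[OF sC[OF a(2)]]]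
            by blast+
          then show "g b > min (g a) (g d)"
            unfolding g_def inner_cos[OF gu[OF i] gc[OF sC[OF a(1)]]] inner_cos[OF gu[OF i] gc[OF sC[OF a(2)]]]
              inner_cos[OF gu[OF i] gc[OF sC[OF b]]] .
        qed
        show "W i \<subseteq> {1..C}" by (rule Wsub)
        show "card (W i) \<le> K" using cardW UCi by simp
        show "K < C" by fact
        fix T assume T: "T \<subseteq> {1..C}" "card T \<le> K"
        have injT: "inj_on \<sigma> T" using inj T inj_on_subset by blast
        have "sum g T = (\<Sum>j\<in>\<sigma> ` T. inner (u i) (c j))"
          unfolding g_def using injT by (simp add: sum.reindex)
        also have "\<dots> \<le> (\<Sum>j\<in>UC i. inner (u i) (c j))"
        proof (rule opt0)
          show "\<sigma> ` T \<subseteq> {1..C}" using T sC by auto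
          have "finite T" using T finite_subset by blast
          then show "card (\<sigma> ` T) \<le> K" using card_image_le[of T \<sigma>] T by linarith
        qed
        finally show "sum g T \<le> sum g (W i)" using sumW by simp
      qed
      then show ?thesis using Wsub by simp
    qed
    have eq: "{k \<in> {1..C}. \<sigma> k \<in> stay_set U C abar UC} = {k \<in> {1..C}. abar \<le> card {i \<in> {1..U}. k \<in> W i}}"
    proof (rule Collect_cong)
      fix k
      show "(k \<in> {1..C} \<and> \<sigma> k \<in> stay_set U C abar UC) = (k \<in> {1..C} \<and> abar \<le> card {i \<in> {1..U}. k \<in> W i})"
      proof (cases "k \<in> {1..C}")
        case True
        then have "{i \<in> {1..U}. k \<in> W i} = {i \<in> {1..U}. \<sigma> k \<in> UC i}" unfolding W_def by simp
        then show ?thesis using True sC[OF True] unfolding stay_set_def by simp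
      next
        case False then show ?thesis by blast
      qed
    qed
    show "\<exists>i\<in>{1..C}. \<exists>j\<in>{1..C}. {k \<in> {1..C}. \<sigma> k \<in> stay_set U C abar UC} = {i..j} \<and> j + 1 - i \<le> K"
      unfolding eq
      apply (rule comb[where r=r])
      using Wprops assms by blast+
  qed
qed

end
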